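(* Let $p,q\in\Bbbk^\times$. If $B(q)\cong B(p)$, then $p=q$.
   Context: $\Bbbk$ is an algebraically closed field of characteristic zero. Paths are written left to right. Let $Q$ be the quiver with vertices $e_1,e_2$, a loop $a$ at $e_1$, a loop $c$ at $e_2$, and arrows $b:e_1\to e_2$, $d:e_2\to e_1$; for $q\in\Bbbk^\times$, $B(q)=\Bbbk Q/(ab-bc,\ cd-q\,da)$. *)

theory Defs
  imports "HOL-Algebra.QuotRing"
begin

section \<open>The quiver Q and its path algebra kQ (paths composed left to right)\<close>

datatype vert = V1 | V2
datatype arr = Aa | Bb | Cc | Dd

fun src :: "arr \<Rightarrow> vert" where
  "src Aa = V1" | "src Bb = V1" | "src Cc = V2" | "src Dd = V2"

fun tgt :: "arr \<Rightarrow> vert" where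
  "tgt Aa = V1" | "tgt Bb = V2" | "tgt Cc = V2" | "tgt Dd = V1"

text \<open>A path is a start vertex together with a (possibly empty) list of arrows;
  the empty list at vertex v is the trivial path e_v.\<close>
type_synonym path = "vert \<times> arr list"

fun valid_path :: "vert \<Rightarrow> arr list \<Rightarrow> bool" where
  "valid_path v [] = True"
| "valid_path v (x # xs) = (src x = v \<and> valid_path (tgt x) xs)"

fun end_vert :: "vert \<Rightarrow> arr list \<Rightarrow> vert" where
  "end_vert v [] = v"
| "end_vert v (x # xs) = end_vert (tgt x) xs"

definition kq_carrier :: "(path \<Rightarrow> 'a::field) set" where
  "kq_carrier = {x. finite {p. x p \<noteq> 0} \<and> (\<forall>v as. x (v, as) \<noteq> 0 \<longrightarrow> valid_path v as)}"

text \<open>Multiplication: concatenation of paths (zero if not composable), extended bilinearly.\<close>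
definition pmul :: "(path \<Rightarrow> 'a::field) \<Rightarrow> (path \<Rightarrow> 'a) \<Rightarrow> path \<Rightarrow> 'a" where
  "pmul x y = (\<lambda>(v, cs). \<Sum>i\<in>{0..length cs}.
      x (v, take i cs) * y (end_vert v (take i cs), drop i cs))"

definition pone :: "path \<Rightarrow> 'a::field" where
  "pone = (\<lambda>(v, cs). if cs = [] then 1 else 0)"

definition path_alg :: "(path \<Rightarrow> 'a::field) ring" where
  "path_alg = \<lparr>carrier = kq_carrier, mult = pmul, one = pone,
               zero = (\<lambda>_. 0), add = (\<lambda>x y p. x p + y p)\<rparr>"

definition basis_path :: "vert \<Rightarrow> arr list \<Rightarrow> path \<Rightarrow> 'a::field" where
  "basis_path v as = (\<lambda>p. if p = (v, as) then 1 else 0)"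

definition scal :: "'a::field \<Rightarrow> (path \<Rightarrow> 'a) \<Rightarrow> path \<Rightarrow> 'a" where
  "scal c x = (\<lambda>p. c * x p)"

definition rel_ideal :: "'a::field \<Rightarrow> (path \<Rightarrow> 'a) set" where
  "rel_ideal q = genideal path_alg
     { (\<lambda>p. basis_path V1 [Aa, Bb] p - basis_path V1 [Bb, Cc] p),
       (\<lambda>p. basis_path V2 [Cc, Dd] p - q * basis_path V2 [Dd, Aa] p) }"

definition B_alg :: "'a::field \<Rightarrow> (path \<Rightarrow> 'a) set ring" where
  "B_alg q = path_alg Quot (rel_ideal q)"

text \<open>Isomorphism of k-algebras: a ring isomorphism commuting with the structure
  maps k \<rightarrow> B(q), c \<mapsto> class of c\<cdot>1 (hence k-linear).\<close>
definition kalg_iso :: "'a::field \<Rightarrow> 'a \<Rightarrow> bool" where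
  "kalg_iso q p \<longleftrightarrow> (\<exists>h \<in> ring_iso (B_alg q) (B_alg p).
      \<forall>c. h (rel_ideal q +>\<^bsub>path_alg\<^esub> scal c pone) = rel_ideal p +>\<^bsub>path_alg\<^esub> scal c pone)"

definition alg_closed_field :: "'a::field itself \<Rightarrow> bool" where
  "alg_closed_field _ \<longleftrightarrow> (\<forall>(n::nat) (c::nat \<Rightarrow> 'a). n > 0 \<longrightarrow>
      (\<exists>x. x ^ n + (\<Sum>i<n. c i * x ^ i) = 0))"

end

theory Submission
  imports Defs
begin

lemma end_vert_append[simp]: "end_vert v (xs @ ys) = end_vert (end_vert v xs) ys"
  by (induction xs arbitrary: v) auto

lemma valid_path_append[simp]: "valid_path v (xs @ ys) = (valid_path v xs \<and> valid_path (end_vert v xs) ys)"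
  by (induction xs arbitrary: v) auto

lemma triangle_sum:
  fixes f :: "nat \<Rightarrow> nat \<Rightarrow> 'b::comm_monoid_add"
  shows "(\<Sum>i\<le>n. \<Sum>j\<le>i. f j i) = (\<Sum>j\<le>n. \<Sum>k\<le>n-j. f j (j+k))"
proof (induction n)
  case 0 then show ?case by simp
next
  case (Suc n)
  have "(\<Sum>j\<le>Suc n. \<Sum>k\<le>Suc n-j. f j (j+k)) = (\<Sum>j\<le>n. \<Sum>k\<le>Suc n-j. f j (j+k)) + f (Suc n) (Suc n)"
    by simp
  also have "(\<Sum>j\<le>n. \<Sum>k\<le>Suc n-j. f j (j+k)) = (\<Sum>j\<le>n. (\<Sum>k\<le>n-j. f j (j+k)) + f j (Suc n))"
  proof (rule sum.cong[OF refl])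
    fix j assume "j \<in> {..n}"
    then have "Suc n - j = Suc (n - j)" by auto
    then show "(\<Sum>k\<le>Suc n-j. f j (j+k)) = (\<Sum>k\<le>n-j. f j (j+k)) + f j (Suc n)"
      using \<open>j \<in> {..n}\<close> by simp
  qed
  finally show ?case using Suc by (simp add: sum.distrib add.assoc)
qed

lemma pmul_assoc:
  fixes x y z :: "path \<Rightarrow> 'a::field"
  shows "pmul (pmul x y) z = pmul x (pmul y z)"
proof (rule ext, clarify)
  fix v and cs :: "arr list"
  let ?n = "length cs"
  let ?f = "\<lambda>j i. x (v, take j cs) * y (end_vert v (take j cs), drop j (take i cs)) * z (end_vert v (take i cs), drop i cs)"
  have "pmul (pmul x y) z (v, cs) = (\<Sum>i\<le>?n. (\<Sum>j\<le>i. x (v, take j (take i cs)) * y (end_vert v (take j (take i cs)), drop j (take i cs))) * z (end_vert v (take i cs), drop i cs))"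
    unfolding pmul_def by (simp add: atLeast0AtMost)
  also have "\<dots> = (\<Sum>i\<le>?n. \<Sum>j\<le>i. ?f j i)"
    by (rule sum.cong[OF refl], simp add: sum_distrib_right)
  also have "\<dots> = (\<Sum>j\<le>?n. \<Sum>k\<le>?n-j. ?f j (j+k))" by (rule triangle_sum)
  also have "\<dots> = (\<Sum>j\<le>?n. x (v, take j cs) * (\<Sum>k\<le>?n-j. y (end_vert v (take j cs), take k (drop j cs)) * z (end_vert (end_vert v (take j cs)) (take k (drop j cs)), drop k (drop j cs))))"
  proof (rule sum.cong[OF refl])
    fix j assume j: "j \<in> {..?n}"
    show "(\<Sum>k\<le>?n-j. ?f j (j+k)) = x (v, take j cs) * (\<Sum>k\<le>?n-j. y (end_vert v (take j cs), take k (drop j cs)) * z (end_vert (end_vert v (take j cs)) (take k (drop j cs)), drop k (drop j cs)))"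
      unfolding sum_distrib_left
    proof (rule sum.cong[OF refl])
      fix k
      have e1: "drop j (take (j+k) cs) = take k (drop j cs)" by (simp add: take_drop add.commute)
      have e2: "take (j+k) cs = take j cs @ take k (drop j cs)" by (rule take_add)
      show "?f j (j+k) = x (v, take j cs) * (y (end_vert v (take j cs), take k (drop j cs)) * z (end_vert (end_vert v (take j cs)) (take k (drop j cs)), drop k (drop j cs)))"
        unfolding e1 by (simp only: e2 end_vert_append drop_drop add.commute mult.assoc)
    qed
  qed
  also have "\<dots> = pmul x (pmul y z) (v, cs)"
    unfolding pmul_def by (simp add: atLeast0AtMost)
  finally show "pmul (pmul x y) z (v, cs) = pmul x (pmul y z) (v, cs)" .
qed

lemma pone_mul: "pmul pone y = (y :: path \<Rightarrow> 'a::field)"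
proof (rule ext, clarify)
  fix v and cs :: "arr list"
  show "pmul pone y (v, cs) = y (v, cs)"
  proof (cases cs)
    case Nil then show ?thesis by (simp add: pmul_def pone_def)
  next
    case (Cons a as)
    have "pmul pone y (v, cs) = (\<Sum>i\<le>Suc (length as). pone (v, take i cs) * y (end_vert v (take i cs), drop i cs))"
      by (simp add: pmul_def Cons atLeast0AtMost)
    also have "\<dots> = y (v, cs) + (\<Sum>i\<le>length as. pone (v, take (Suc i) cs) * y (end_vert v (take (Suc i) cs), drop (Suc i) cs))"
      by (subst sum.atMost_Suc_shift) (simp add: pone_def)
    also have "\<dots> = y (v, cs)"
      by (simp add: pone_def Cons)
    finally show ?thesis .
  qed
qed

lemma mul_pone: "pmul x pone = (x :: path \<Rightarrow> 'a::field)"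
proof (rule ext, clarify)
  fix v and cs :: "arr list"
  have "pmul x pone (v, cs) = (\<Sum>i<Suc (length cs). x (v, take i cs) * pone (end_vert v (take i cs), drop i cs))"
    by (simp add: pmul_def atLeast0AtMost lessThan_Suc_atMost)
  also have "\<dots> = (\<Sum>i<length cs. x (v, take i cs) * pone (end_vert v (take i cs), drop i cs)) + x (v, cs)"
    by (simp add: pone_def)
  also have "\<dots> = x (v, cs)"
    by (simp add: pone_def)
  finally show "pmul x pone (v, cs) = x (v, cs)" .
qed

lemma pmul_nonzero:
  assumes "pmul x y (v, cs) \<noteq> 0"
  shows "\<exists>i\<le>length cs. x (v, take i cs) \<noteq> 0 \<and> y (end_vert v (take i cs), drop i cs) \<noteq> 0"
proof -
  have "(\<Sum>i\<in>{0..length cs}. x (v, take i cs) * y (end_vert v (take i cs), drop i cs)) \<noteq> 0"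
    using assms by (simp add: pmul_def)
  then obtain i where "i \<in> {0..length cs}" "x (v, take i cs) * y (end_vert v (take i cs), drop i cs) \<noteq> 0"
    by (rule sum.not_neutral_contains_not_neutral)
  then show ?thesis by auto
qed

lemma pmul_closed:
  assumes "x \<in> kq_carrier" "y \<in> kq_carrier"
  shows "pmul x y \<in> kq_carrier"
proof -
  let ?Sx = "{p. x p \<noteq> 0}" and ?Sy = "{p. y p \<noteq> 0}"
  let ?g = "\<lambda>ab :: path \<times> path. (fst (fst ab), snd (fst ab) @ snd (snd ab))"
  have fin: "finite ?Sx" "finite ?Sy" using assms by (auto simp: kq_carrier_def)
  have sub: "{p. pmul x y p \<noteq> 0} \<subseteq> ?g ` (?Sx \<times> ?Sy)"
  proof
    fix p assume "p \<in> {p. pmul x y p \<noteq> 0}"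
    then obtain v cs where p: "p = (v, cs)" and nz: "pmul x y (v, cs) \<noteq> 0" by (cases p) auto
    obtain i where i: "x (v, take i cs) \<noteq> 0" "y (end_vert v (take i cs), drop i cs) \<noteq> 0"
      using pmul_nonzero[OF nz] by blast
    have "p = ?g ((v, take i cs), (end_vert v (take i cs), drop i cs))" by (simp add: p)
    moreover have "((v, take i cs), (end_vert v (take i cs), drop i cs)) \<in> ?Sx \<times> ?Sy" using i by simp
    ultimately show "p \<in> ?g ` (?Sx \<times> ?Sy)" by (rule image_eqI)
  qed
  have f2: "finite (?g ` (?Sx \<times> ?Sy))" using fin by simp
  have "finite {p. pmul x y p \<noteq> 0}" by (rule finite_subset[OF sub f2])
  moreover have "valid_path v cs" if nz: "pmul x y (v, cs) \<noteq> 0" for v cs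
  proof -
    obtain i where "x (v, take i cs) \<noteq> 0" "y (end_vert v (take i cs), drop i cs) \<noteq> 0"
      using pmul_nonzero[OF nz] by blast
    then have "valid_path v (take i cs)" "valid_path (end_vert v (take i cs)) (drop i cs)"
      using assms unfolding kq_carrier_def by blast+
    then show ?thesis using valid_path_append[of v "take i cs" "drop i cs"] by simp
  qed
  ultimately show ?thesis unfolding kq_carrier_def by blast
qed

lemma pmul_distL: "pmul (\<lambda>p. x p + y p) z = (\<lambda>p. pmul x z p + pmul y z p)"
  by (rule ext, clarify) (simp add: pmul_def distrib_right sum.distrib)

lemma pmul_distR: "pmul z (\<lambda>p. x p + y p) = (\<lambda>p. pmul z x p + pmul z y p)"
  by (rule ext, clarify) (simp add: pmul_def distrib_left sum.distrib)

lemma add_closed: "x \<in> kq_carrier \<Longrightarrow> y \<in> kq_carrier \<Longrightarrow> (\<lambda>p. x p + y p) \<in> kq_carrier"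
proof -
  assume x: "x \<in> kq_carrier" and y: "y \<in> kq_carrier"
  have "{p. x p + y p \<noteq> 0} \<subseteq> {p. x p \<noteq> 0} \<union> {p. y p \<noteq> 0}" by auto
  then have "finite {p. x p + y p \<noteq> 0}"
    using x y by (auto simp: kq_carrier_def intro: finite_subset)
  moreover have "valid_path v as" if "x (v, as) + y (v, as) \<noteq> 0" for v as
  proof (cases "x (v, as) = 0")
    case True then have "y (v, as) \<noteq> 0" using that by simp
    then show ?thesis using y by (auto simp: kq_carrier_def)
  next
    case False then show ?thesis using x by (auto simp: kq_carrier_def)
  qed
  ultimately show ?thesis by (auto simp: kq_carrier_def)
qed

lemma neg_closed: "x \<in> kq_carrier \<Longrightarrow> (\<lambda>p. - x p) \<in> kq_carrier"
  by (auto simp: kq_carrier_def)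

lemma pone_closed: "pone \<in> kq_carrier"
proof -
  have "{p. (pone :: path \<Rightarrow> 'a) p \<noteq> 0} \<subseteq> {(V1, []), (V2, [])}"
    by (clarsimp simp: pone_def split: if_splits) (metis vert.exhaust)
  then show ?thesis
    by (auto simp: kq_carrier_def pone_def intro: finite_subset)
qed

lemma zero_closed: "(\<lambda>_. 0) \<in> kq_carrier"
  by (simp add: kq_carrier_def)

lemma ring_path_alg: "ring (path_alg :: (path \<Rightarrow> 'a::field) ring)"
proof (rule ringI)
  show "abelian_group (path_alg :: (path \<Rightarrow> 'a::field) ring)"
  proof (rule abelian_groupI)
    fix x assume "x \<in> carrier (path_alg :: (path \<Rightarrow> 'a::field) ring)"
    then show "\<exists>y\<in>carrier path_alg. y \<oplus>\<^bsub>path_alg\<^esub> x = \<zero>\<^bsub>path_alg\<^esub>"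
      by (intro bexI[where x = "\<lambda>p. - x p"]) (auto simp: path_alg_def neg_closed)
  qed (simp_all add: path_alg_def add_closed zero_closed add_ac)
  show "monoid (path_alg :: (path \<Rightarrow> 'a::field) ring)"
    by (rule monoidI) (simp_all add: path_alg_def pmul_closed pone_closed pmul_assoc pone_mul mul_pone)
qed (simp_all add: path_alg_def pmul_distL pmul_distR)

datatype sb = Ke1 | Ke2 | Ka | Kb | Kc | Kd | Kf | Kg

definition mS :: "'a::field \<Rightarrow> (sb \<Rightarrow> 'a) \<Rightarrow> (sb \<Rightarrow> 'a) \<Rightarrow> sb \<Rightarrow> 'a" where
  "mS p X Y = (\<lambda>i. case i of
      Ke1 \<Rightarrow> X Ke1 * Y Ke1
    | Ke2 \<Rightarrow> X Ke2 * Y Ke2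
    | Ka \<Rightarrow> X Ke1 * Y Ka + X Ka * Y Ke1
    | Kb \<Rightarrow> X Ke1 * Y Kb + X Kb * Y Ke2
    | Kc \<Rightarrow> X Ke2 * Y Kc + X Kc * Y Ke2
    | Kd \<Rightarrow> X Ke2 * Y Kd + X Kd * Y Ke1
    | Kf \<Rightarrow> X Ke1 * Y Kf + X Ka * Y Kb + X Kb * Y Kc + X Kf * Y Ke2
    | Kg \<Rightarrow> X Ke2 * Y Kg + p * X Kc * Y Kd + X Kd * Y Ka + X Kg * Y Ke1)"

definition sone :: "sb \<Rightarrow> 'a::field" where
  "sone = (\<lambda>i. if i = Ke1 \<or> i = Ke2 then 1 else 0)"

definition ssc :: "'a::field \<Rightarrow> (sb \<Rightarrow> 'a) \<Rightarrow> sb \<Rightarrow> 'a" where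
  "ssc c X = (\<lambda>i. c * X i)"

definition sadd :: "(sb \<Rightarrow> 'a::field) \<Rightarrow> (sb \<Rightarrow> 'a) \<Rightarrow> sb \<Rightarrow> 'a" where
  "sadd X Y = (\<lambda>i. X i + Y i)"

definition szero :: "sb \<Rightarrow> 'a::field" where "szero = (\<lambda>i. 0)"

definition bas :: "sb \<Rightarrow> sb \<Rightarrow> 'a::field" where
  "bas k = (\<lambda>i. if i = k then 1 else 0)"

lemma sb_eq: "(X = Y) \<longleftrightarrow> (X Ke1 = Y Ke1 \<and> X Ke2 = Y Ke2 \<and> X Ka = Y Ka \<and> X Kb = Y Kb \<and>
   X Kc = Y Kc \<and> X Kd = Y Kd \<and> X Kf = Y Kf \<and> X Kg = Y Kg)"
  by (auto intro!: ext) (case_tac x, auto)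

lemma mS_apply[simp]:
  "mS p X Y Ke1 = X Ke1 * Y Ke1"
  "mS p X Y Ke2 = X Ke2 * Y Ke2"
  "mS p X Y Ka = X Ke1 * Y Ka + X Ka * Y Ke1"
  "mS p X Y Kb = X Ke1 * Y Kb + X Kb * Y Ke2"
  "mS p X Y Kc = X Ke2 * Y Kc + X Kc * Y Ke2"
  "mS p X Y Kd = X Ke2 * Y Kd + X Kd * Y Ke1"
  "mS p X Y Kf = X Ke1 * Y Kf + X Ka * Y Kb + X Kb * Y Kc + X Kf * Y Ke2"
  "mS p X Y Kg = X Ke2 * Y Kg + p * X Kc * Y Kd + X Kd * Y Ka + X Kg * Y Ke1"
  by (simp_all add: mS_def)

lemma sone_apply[simp]: "sone Ke1 = 1" "sone Ke2 = 1" "sone Ka = 0" "sone Kb = 0"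
  "sone Kc = 0" "sone Kd = 0" "sone Kf = 0" "sone Kg = 0"
  by (simp_all add: sone_def)

lemma bas_apply[simp]: "bas k i = (if i = k then 1 else 0)" by (simp add: bas_def)
lemma ssc_apply[simp]: "ssc c X i = c * X i" by (simp add: ssc_def)
lemma sadd_apply[simp]: "sadd X Y i = X i + Y i" by (simp add: sadd_def)
lemma szero_apply[simp]: "szero i = 0" by (simp add: szero_def)

lemma sadd_zero_r[simp]: "sadd X szero = X" by (simp add: sb_eq)
lemma sadd_zero_l[simp]: "sadd szero X = X" by (simp add: sb_eq)

lemma mS_assoc: "mS p (mS p X Y) Z = mS p X (mS p Y Z)"
  by (simp add: sb_eq algebra_simps)

lemma mS_distL: "mS p (sadd X Y) Z = sadd (mS p X Z) (mS p Y Z)"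
  by (simp add: sb_eq algebra_simps)

lemma mS_distR: "mS p Z (sadd X Y) = sadd (mS p Z X) (mS p Z Y)"
  by (simp add: sb_eq algebra_simps)

lemma mS_one_l[simp]: "mS p sone X = X" by (simp add: sb_eq)
lemma mS_one_r[simp]: "mS p X sone = X" by (simp add: sb_eq)
lemma mS_zero_l[simp]: "mS p szero X = szero" by (simp add: sb_eq)
lemma mS_zero_r[simp]: "mS p X szero = szero" by (simp add: sb_eq)
lemma mS_ssc_l: "mS p (ssc c X) Y = ssc c (mS p X Y)" by (simp add: sb_eq algebra_simps)
lemma mS_ssc_r: "mS p X (ssc c Y) = ssc c (mS p X Y)" by (simp add: sb_eq algebra_simps)
lemma ssc_one_l: "mS p (ssc c sone) X = ssc c X" by (simp add: sb_eq)
lemma ssc_one_r: "mS p X (ssc c sone) = ssc c X" by (simp add: sb_eq)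

lemma nil3:
  assumes "X Ke1 = 0" "X Ke2 = 0" "Y Ke1 = 0" "Y Ke2 = 0" "Z Ke1 = 0" "Z Ke2 = 0"
  shows "mS p (mS p X Y) Z = szero"
  using assms by (simp add: sb_eq)

definition sinv :: "'a::field \<Rightarrow> (sb \<Rightarrow> 'a) \<Rightarrow> sb \<Rightarrow> 'a" where
  "sinv p u = (\<lambda>i. case i of Ke1 \<Rightarrow> 1 | Ke2 \<Rightarrow> 1 | Ka \<Rightarrow> - u Ka | Kb \<Rightarrow> - u Kb | Kc \<Rightarrow> - u Kc
     | Kd \<Rightarrow> - u Kd | Kf \<Rightarrow> - u Kf + u Ka * u Kb + u Kb * u Kc
     | Kg \<Rightarrow> - u Kg + p * u Kc * u Kd + u Kd * u Ka)"

lemma sinv: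
  assumes "u Ke1 = 1" "u Ke2 = 1"
  shows "mS p u (sinv p u) = sone" "mS p (sinv p u) u = sone"
  using assms by (simp_all add: sb_eq sinv_def algebra_simps)

definition subalg :: "'a::field \<Rightarrow> ((sb \<Rightarrow> 'a) set) \<Rightarrow> bool" where
  "subalg p T \<longleftrightarrow> (\<forall>c. ssc c sone \<in> T) \<and> (\<forall>x\<in>T. \<forall>y\<in>T. sadd x y \<in> T) \<and> (\<forall>x\<in>T. \<forall>y\<in>T. mS p x y \<in> T)"

definition good :: "'a::field \<Rightarrow> 'a \<Rightarrow> (sb \<Rightarrow> 'a) \<Rightarrow> (sb \<Rightarrow> 'a) \<Rightarrow> (sb \<Rightarrow> 'a) \<Rightarrow> (sb \<Rightarrow> 'a) \<Rightarrow> (sb \<Rightarrow> 'a) \<Rightarrow> (sb \<Rightarrow> 'a) \<Rightarrow> bool" where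
  "good p q E1 E2 A B C D \<longleftrightarrow>
     sadd E1 E2 = sone \<and> mS p E1 E1 = E1 \<and> mS p E2 E2 = E2 \<and> mS p E1 E2 = szero \<and> mS p E2 E1 = szero \<and>
     A = mS p (mS p E1 A) E1 \<and> B = mS p (mS p E1 B) E2 \<and> C = mS p (mS p E2 C) E2 \<and> D = mS p (mS p E2 D) E1 \<and>
     mS p A B = mS p B C \<and> mS p C D = ssc q (mS p D A) \<and>
     (\<forall>T. subalg p T \<longrightarrow> E1 \<in> T \<longrightarrow> E2 \<in> T \<longrightarrow> A \<in> T \<longrightarrow> B \<in> T \<longrightarrow> C \<in> T \<longrightarrow> D \<in> T \<longrightarrow> (\<forall>z. z \<in> T))"

lemma subalg_zero: "subalg p T \<Longrightarrow> szero \<in> T"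
proof -
  assume "subalg p T"
  then have "ssc 0 sone \<in> T" by (simp add: subalg_def)
  moreover have "ssc 0 sone = (szero :: sb \<Rightarrow> 'a)" by (simp add: sb_eq)
  ultimately show ?thesis by simp
qed

lemma subalg_one: "subalg p T \<Longrightarrow> sone \<in> T"
proof -
  assume "subalg p T"
  then have "ssc 1 sone \<in> T" by (simp add: subalg_def)
  moreover have "ssc 1 sone = (sone :: sb \<Rightarrow> 'a)" by (simp add: sb_eq)
  ultimately show ?thesis by simp
qed

lemma subalg_coord:
  assumes "k \<in> {Ka, Kb, Kc, Kd}"
  shows "subalg p {X. X k = 0}"
  using assms unfolding subalg_def by auto

lemma good_gen:
  assumes "good p q E1 E2 A B C D" "subalg p T"
    "E1 \<in> T" "E2 \<in> T" "A \<in> T" "B \<in> T" "C \<in> T" "D \<in> T"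
  shows "z \<in> T"
  using assms unfolding good_def by blast

lemma comm_contra:
  assumes g: "good p q E1 E2 A B C D"
    and h: "\<And>X. X \<in> {E1, E2, A, B, C, D} \<Longrightarrow> X = szero \<or> X = sone \<or> X = W"
  shows False
proof -
  let ?T1 = "{X. mS p X W = mS p W X}"
  have s1: "subalg p ?T1"
    unfolding subalg_def
  proof (intro conjI ballI allI)
    fix X Y assume X: "X \<in> ?T1" and Y: "Y \<in> ?T1"
    have "mS p (mS p X Y) W = mS p X (mS p W Y)" using Y by (simp only: mem_Collect_eq mS_assoc)
    also have "\<dots> = mS p (mS p W X) Y" using X by (simp only: mem_Collect_eq mS_assoc[symmetric])
    finally show "mS p X Y \<in> ?T1" by (simp only: mem_Collect_eq mS_assoc)
    show "sadd X Y \<in> ?T1" using X Y by (simp add: mS_distL mS_distR)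
  next
    fix c show "ssc c sone \<in> ?T1" by (simp add: ssc_one_l ssc_one_r)
  qed
  have m1: "X \<in> ?T1" if "X \<in> {E1, E2, A, B, C, D}" for X
  proof -
    from h[OF that] show ?thesis by auto
  qed
  have w: "mS p X W = mS p W X" for X
    using good_gen[OF g s1 m1 m1 m1 m1 m1 m1, of X] by simp
  let ?T2 = "{X. \<forall>Y. mS p X Y = mS p Y X}"
  have s2: "subalg p ?T2"
    unfolding subalg_def
  proof (intro conjI ballI allI)
    fix X Y assume X: "X \<in> ?T2" and Y: "Y \<in> ?T2"
    have "mS p (mS p X Y) Z = mS p Z (mS p X Y)" for Z
    proof -
      have "mS p (mS p X Y) Z = mS p X (mS p Z Y)" using Y by (simp only: mem_Collect_eq mS_assoc)
      also have "\<dots> = mS p (mS p Z X) Y" using X by (simp only: mem_Collect_eq mS_assoc[symmetric])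
      finally show ?thesis by (simp only: mS_assoc)
    qed
    then show "mS p X Y \<in> ?T2" by simp
    show "sadd X Y \<in> ?T2" using X Y by (simp add: mS_distL mS_distR)
  next
    fix c show "ssc c sone \<in> ?T2" by (simp add: ssc_one_l ssc_one_r)
  qed
  have m2: "X \<in> ?T2" if "X \<in> {E1, E2, A, B, C, D}" for X
  proof -
    from h[OF that] show ?thesis using w by auto
  qed
  have "mS p X Y = mS p Y X" for X Y
    using good_gen[OF g s2 m2 m2 m2 m2 m2 m2, of X] by simp
  from this[of "bas Kb" "bas Kc"] show False by (simp add: sb_eq)
qed

definition cj :: "'a::field \<Rightarrow> (sb \<Rightarrow> 'a) \<Rightarrow> (sb \<Rightarrow> 'a) \<Rightarrow> (sb \<Rightarrow> 'a) \<Rightarrow> sb \<Rightarrow> 'a" where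
  "cj p u v X = mS p (mS p u X) v"

lemma cj_add: "cj p u v (sadd X Y) = sadd (cj p u v X) (cj p u v Y)"
  by (simp add: cj_def mS_distL mS_distR)
lemma cj_ssc: "cj p u v (ssc c X) = ssc c (cj p u v X)"
  by (simp add: cj_def mS_ssc_l mS_ssc_r)
lemma cj_one: "mS p u v = sone \<Longrightarrow> cj p u v sone = sone"
  by (simp add: cj_def)
lemma cj_zero: "cj p u v szero = szero"
  by (simp add: cj_def)
lemma cj_mul: "mS p v u = sone \<Longrightarrow> cj p u v (mS p X Y) = mS p (cj p u v X) (cj p u v Y)"
proof -
  assume vu: "mS p v u = sone"
  have "mS p (cj p u v X) (cj p u v Y) = mS p (mS p u X) (mS p (mS p v u) (mS p Y v))"
    by (simp add: cj_def mS_assoc)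
  also have "\<dots> = cj p u v (mS p X Y)" by (simp add: vu cj_def mS_assoc)
  finally show ?thesis by simp
qed
lemma cj_inv: "mS p u v = sone \<Longrightarrow> cj p u v (cj p v u X) = X"
  by (simp add: cj_def mS_assoc) (simp add: mS_assoc[symmetric])

lemma good_cj:
  assumes g: "good p q E1 E2 A B C D" and uv: "mS p u v = sone" and vu: "mS p v u = sone"
  shows "good p q (cj p u v E1) (cj p u v E2) (cj p u v A) (cj p u v B) (cj p u v C) (cj p u v D)"
proof -
  have g1: "sadd E1 E2 = sone" and g2: "mS p E1 E1 = E1" and g3: "mS p E2 E2 = E2"
    and g4: "mS p E1 E2 = szero" and g5: "mS p E2 E1 = szero"
    and g6: "mS p (mS p E1 A) E1 = A" and g7: "mS p (mS p E1 B) E2 = B"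
    and g8: "mS p (mS p E2 C) E2 = C" and g9: "mS p (mS p E2 D) E1 = D"
    and g10: "mS p A B = mS p B C" and g11: "mS p C D = ssc q (mS p D A)"
    using g unfolding good_def by metis+
  have gen: "\<forall>z. z \<in> T" if T: "subalg p T" "cj p u v E1 \<in> T" "cj p u v E2 \<in> T" "cj p u v A \<in> T"
     "cj p u v B \<in> T" "cj p u v C \<in> T" "cj p u v D \<in> T" for T
  proof
    fix z
    let ?T0 = "{X. cj p u v X \<in> T}"
    have "subalg p ?T0"
      using T(1) unfolding subalg_def by (simp add: cj_add cj_mul[OF vu] cj_ssc cj_one[OF uv])
    moreover have "E1 \<in> ?T0" "E2 \<in> ?T0" "A \<in> ?T0" "B \<in> ?T0" "C \<in> ?T0" "D \<in> ?T0"
      using T by simp_all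
    ultimately have "cj p v u z \<in> ?T0" by (rule good_gen[OF g])
    then show "z \<in> T" by (simp add: cj_inv[OF uv])
  qed
  let ?c = "cj p u v"
  have M: "mS p (?c X) (?c Y) = ?c (mS p X Y)" for X Y by (simp add: cj_mul[OF vu])
  have c1: "sadd (?c E1) (?c E2) = sone" by (simp only: cj_add[symmetric] g1 cj_one[OF uv])
  have c2: "mS p (?c E1) (?c E1) = ?c E1" "mS p (?c E2) (?c E2) = ?c E2"
    "mS p (?c E1) (?c E2) = szero" "mS p (?c E2) (?c E1) = szero"
    by (simp_all only: M g2 g3 g4 g5 cj_zero)
  have c3: "?c A = mS p (mS p (?c E1) (?c A)) (?c E1)" "?c B = mS p (mS p (?c E1) (?c B)) (?c E2)"
    "?c C = mS p (mS p (?c E2) (?c C)) (?c E2)" "?c D = mS p (mS p (?c E2) (?c D)) (?c E1)"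
    by (simp_all only: M g6 g7 g8 g9)
  have c4: "mS p (?c A) (?c B) = mS p (?c B) (?c C)" "mS p (?c C) (?c D) = ssc q (mS p (?c D) (?c A))"
    by (simp_all only: M g10 g11 cj_ssc)
  show ?thesis unfolding good_def using c1 c2 c3 c4 gen by blast
qed

lemma normalize_idem:
  assumes "mS p e e = e" "mS p e f = szero" "mS p E1 E1 = E1" "mS p E2 E1 = szero"
    and u: "u = sadd (mS p e E1) (mS p f E2)" and uv: "mS p u v = sone"
  shows "cj p u v E1 = e"
proof -
  have "mS p u E1 = sadd (mS p e (mS p E1 E1)) (mS p f (mS p E2 E1))"
    by (simp only: u mS_distL mS_assoc)
  also have "\<dots> = mS p e E1" using assms(3,4) by simp
  finally have 1: "mS p u E1 = mS p e E1" .
  have "mS p e u = sadd (mS p (mS p e e) E1) (mS p (mS p e f) E2)"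
    by (simp only: u mS_distR mS_assoc)
  also have "\<dots> = mS p e E1" using assms(1,2) by simp
  finally have 2: "mS p e u = mS p e E1" .
  have "cj p u v E1 = mS p (mS p e u) v" using 1 2 by (simp add: cj_def)
  also have "\<dots> = e" by (simp add: mS_assoc uv)
  finally show ?thesis .
qed

lemma good_parts:
  assumes "good p q E1 E2 A B C D"
  shows "sadd E1 E2 = sone" "mS p E1 E1 = E1" "mS p E2 E2 = E2"
    "mS p E1 E2 = szero" "mS p E2 E1 = szero"
    "mS p (mS p E1 A) E1 = A" "mS p (mS p E1 B) E2 = B"
    "mS p (mS p E2 C) E2 = C" "mS p (mS p E2 D) E1 = D"
    "mS p A B = mS p B C" "mS p C D = ssc q (mS p D A)"
  using assms unfolding good_def by metis+

lemma coord_nonzero: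
  assumes g: "good p q E1 E2 A B C D" and k: "k \<in> {Ka, Kb, Kc, Kd}"
    and "E1 k = 0" "E2 k = 0" "A k = 0" "B k = 0" "C k = 0" "D k = 0"
  shows False
proof -
  have "bas k \<in> {X. X k = 0}"
    using good_gen[OF g subalg_coord[OF k], of "bas k"] assms by simp
  then show False by simp
qed

lemma norm10:
  assumes g: "good p q (bas Ke1) (bas Ke2) A B C D"
  shows "p = q"
proof -
  note G = good_parts[OF g]
  have A: "A Ke2 = 0" "A Kb = 0" "A Kc = 0" "A Kd = 0" "A Kf = 0" "A Kg = 0"
    using fun_cong[OF G(6), of Ke2] fun_cong[OF G(6), of Kb] fun_cong[OF G(6), of Kc]
      fun_cong[OF G(6), of Kd] fun_cong[OF G(6), of Kf] fun_cong[OF G(6), of Kg] by simp_all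
  have B: "B Ke1 = 0" "B Ke2 = 0" "B Ka = 0" "B Kc = 0" "B Kd = 0" "B Kg = 0"
    using fun_cong[OF G(7), of Ke1] fun_cong[OF G(7), of Ke2] fun_cong[OF G(7), of Ka]
      fun_cong[OF G(7), of Kc] fun_cong[OF G(7), of Kd] fun_cong[OF G(7), of Kg] by simp_all
  have C: "C Ke1 = 0" "C Ka = 0" "C Kb = 0" "C Kd = 0" "C Kf = 0" "C Kg = 0"
    using fun_cong[OF G(8), of Ke1] fun_cong[OF G(8), of Ka] fun_cong[OF G(8), of Kb]
      fun_cong[OF G(8), of Kd] fun_cong[OF G(8), of Kf] fun_cong[OF G(8), of Kg] by simp_all
  have D: "D Ke1 = 0" "D Ke2 = 0" "D Ka = 0" "D Kb = 0" "D Kc = 0" "D Kf = 0"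
    using fun_cong[OF G(9), of Ke1] fun_cong[OF G(9), of Ke2] fun_cong[OF G(9), of Ka]
      fun_cong[OF G(9), of Kb] fun_cong[OF G(9), of Kc] fun_cong[OF G(9), of Kf] by simp_all
  have nb: "B Kb \<noteq> 0"
    using coord_nonzero[OF g, of Kb] A B C D by auto
  have nd: "D Kd \<noteq> 0"
    using coord_nonzero[OF g, of Kd] A B C D by auto
  have na: "A Ka \<noteq> 0"
    using coord_nonzero[OF g, of Ka] A B C D by auto
  have e1: "A Ke1 * B Kb = B Kb * C Ke2"
    using fun_cong[OF G(10), of Kb] A B C by simp
  have e2: "A Ke1 * B Kf + A Ka * B Kb = B Kb * C Kc + B Kf * C Ke2"
    using fun_cong[OF G(10), of Kf] A B C by simp
  have e3: "C Ke2 * D Kd = q * (D Kd * A Ke1)"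
    using fun_cong[OF G(11), of Kd] A C D by simp
  have e4: "C Ke2 * D Kg + p * C Kc * D Kd = q * (D Kd * A Ka + D Kg * A Ke1)"
    using fun_cong[OF G(11), of Kg] A C D by simp
  have ag: "A Ke1 = C Ke2" using e1 nb by (simp add: mult.commute)
  have lm: "A Ka = C Kc" using e2 nb ag by (simp add: mult.commute)
  have gq: "C Ke2 = q * A Ke1" using e3 nd by (simp add: mult.commute mult.left_commute)
  have "p * A Ka * D Kd = q * A Ka * D Kd"
    using e4 lm gq by (simp add: algebra_simps)
  then show "p = q" using na nd by simp
qed

lemma norm01:
  assumes g: "good p q (bas Ke2) (bas Ke1) A B C D"
  shows "p = q"
proof -
  note G = good_parts[OF g]
  have A: "A Ke1 = 0" "A Ka = 0" "A Kb = 0" "A Kd = 0" "A Kf = 0" "A Kg = 0"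
    using fun_cong[OF G(6), of Ke1] fun_cong[OF G(6), of Ka] fun_cong[OF G(6), of Kb]
      fun_cong[OF G(6), of Kd] fun_cong[OF G(6), of Kf] fun_cong[OF G(6), of Kg] by simp_all
  have B: "B Ke1 = 0" "B Ke2 = 0" "B Ka = 0" "B Kb = 0" "B Kc = 0" "B Kf = 0"
    using fun_cong[OF G(7), of Ke1] fun_cong[OF G(7), of Ke2] fun_cong[OF G(7), of Ka]
      fun_cong[OF G(7), of Kb] fun_cong[OF G(7), of Kc] fun_cong[OF G(7), of Kf] by simp_all
  have C: "C Ke2 = 0" "C Kb = 0" "C Kc = 0" "C Kd = 0" "C Kf = 0" "C Kg = 0"
    using fun_cong[OF G(8), of Ke2] fun_cong[OF G(8), of Kb] fun_cong[OF G(8), of Kc]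
      fun_cong[OF G(8), of Kd] fun_cong[OF G(8), of Kf] fun_cong[OF G(8), of Kg] by simp_all
  have D: "D Ke1 = 0" "D Ke2 = 0" "D Ka = 0" "D Kc = 0" "D Kd = 0" "D Kg = 0"
    using fun_cong[OF G(9), of Ke1] fun_cong[OF G(9), of Ke2] fun_cong[OF G(9), of Ka]
      fun_cong[OF G(9), of Kc] fun_cong[OF G(9), of Kd] fun_cong[OF G(9), of Kg] by simp_all
  have nb: "D Kb \<noteq> 0"
    using coord_nonzero[OF g, of Kb] A B C D by auto
  have nd: "B Kd \<noteq> 0"
    using coord_nonzero[OF g, of Kd] A B C D by auto
  have nc: "A Kc \<noteq> 0"
    using coord_nonzero[OF g, of Kc] A B C D by auto
  have e1: "A Ke2 * B Kd = B Kd * C Ke1"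
    using fun_cong[OF G(10), of Kd] A B C by simp
  have e2: "A Ke2 * B Kg + p * A Kc * B Kd = B Kd * C Ka + B Kg * C Ke1"
    using fun_cong[OF G(10), of Kg] A B C by simp
  have e3: "C Ke1 * D Kb = q * (D Kb * A Ke2)"
    using fun_cong[OF G(11), of Kb] A C D by simp
  have e4: "C Ke1 * D Kf + C Ka * D Kb = q * (D Kb * A Kc + D Kf * A Ke2)"
    using fun_cong[OF G(11), of Kf] A C D by simp
  have ag: "A Ke2 = C Ke1" using e1 nd by (simp add: mult.commute)
  have lm: "p * A Kc = C Ka" using e2 nd ag by (simp add: algebra_simps)
  have gq: "C Ke1 = q * A Ke2" using e3 nb by (simp add: mult.commute mult.left_commute)
  have "p * A Kc * D Kb = q * A Kc * D Kb"
    using e4 lm gq by (simp add: algebra_simps)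
  then show "p = q" using nc nb by simp
qed

lemma idem_coord: "(x::'a::field) * x = x \<Longrightarrow> x = 0 \<or> x = 1"
  by (metis mult_cancel_right2 mult_zero_right)

lemma conj_case:
  assumes g: "good p q E1 E2 A B C D"
    and e: "e = bas k1" and f: "f = bas k2" and k: "(k1 = Ke1 \<and> k2 = Ke2) \<or> (k1 = Ke2 \<and> k2 = Ke1)"
    and u1: "sadd (mS p e E1) (mS p f E2) Ke1 = 1" and u2: "sadd (mS p e E1) (mS p f E2) Ke2 = 1"
  shows "good p q e f (cj p (sadd (mS p e E1) (mS p f E2)) (sinv p (sadd (mS p e E1) (mS p f E2))) A)
     (cj p (sadd (mS p e E1) (mS p f E2)) (sinv p (sadd (mS p e E1) (mS p f E2))) B)
     (cj p (sadd (mS p e E1) (mS p f E2)) (sinv p (sadd (mS p e E1) (mS p f E2))) C)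
     (cj p (sadd (mS p e E1) (mS p f E2)) (sinv p (sadd (mS p e E1) (mS p f E2))) D)"
proof -
  let ?u = "sadd (mS p e E1) (mS p f E2)"
  let ?v = "sinv p ?u"
  note G = good_parts[OF g]
  have uv: "mS p ?u ?v = sone" and vu: "mS p ?v ?u = sone" using sinv[of ?u, OF u1 u2] by auto
  have ee: "mS p e e = e" "mS p e f = szero" using e f k by (auto simp: sb_eq)
  have c1: "cj p ?u ?v E1 = e"
    by (rule normalize_idem[OF ee G(2) G(5) refl uv])
  have gg: "good p q (cj p ?u ?v E1) (cj p ?u ?v E2) (cj p ?u ?v A) (cj p ?u ?v B) (cj p ?u ?v C) (cj p ?u ?v D)"
    by (rule good_cj[OF g uv vu])
  have "sadd (cj p ?u ?v E1) (cj p ?u ?v E2) = sone" using good_parts[OF gg] by simp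
  then have hs: "sadd e (cj p ?u ?v E2) = sone" using c1 by simp
  have h: "cj p ?u ?v E2 i = sone i - e i" for i
    using fun_cong[OF hs, of i] by (simp add: algebra_simps)
  have c2: "cj p ?u ?v E2 = f"
  proof
    fix i show "cj p ?u ?v E2 i = f i" unfolding h using k by (cases i) (auto simp: e f)
  qed
  show ?thesis using gg c1 c2 by simp
qed

theorem good_pq:
  assumes g: "good p q E1 E2 A B C D"
  shows "p = q"
proof -
  note G = good_parts[OF g]
  have E2c: "E2 k = sone k - E1 k" for k using fun_cong[OF G(1), of k] by (simp add: algebra_simps)
  have i1: "E1 Ke1 = 0 \<or> E1 Ke1 = 1" using fun_cong[OF G(2), of Ke1] by (intro idem_coord) simp
  have i2: "E1 Ke2 = 0 \<or> E1 Ke2 = 1" using fun_cong[OF G(2), of Ke2] by (intro idem_coord) simp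
  show ?thesis
  proof (cases "E1 Ke1 = 0")
    case a0: True
    show ?thesis
    proof (cases "E1 Ke2 = 0")
      case b0: True
      have "mS p (mS p E1 E1) E1 = szero" by (rule nil3) (use a0 b0 in simp_all)
      then have E1z: "E1 = szero" using G(2) by simp
      then have E2o: "E2 = sone" using G(1) by simp
      have "A = szero" using G(6) E1z by simp
      moreover have "B = szero" using G(7) E1z by simp
      moreover have "D = szero" using G(9) E1z by simp
      ultimately have False
        using comm_contra[OF g, of C] E1z E2o by auto
      then show ?thesis ..
    next
      case b1: False
      then have b1: "E1 Ke2 = 1" using i2 by simp
      have "good p q (bas Ke2) (bas Ke1) (cj p (sadd (mS p (bas Ke2) E1) (mS p (bas Ke1) E2)) (sinv p (sadd (mS p (bas Ke2) E1) (mS p (bas Ke1) E2))) A)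
     (cj p (sadd (mS p (bas Ke2) E1) (mS p (bas Ke1) E2)) (sinv p (sadd (mS p (bas Ke2) E1) (mS p (bas Ke1) E2))) B)
     (cj p (sadd (mS p (bas Ke2) E1) (mS p (bas Ke1) E2)) (sinv p (sadd (mS p (bas Ke2) E1) (mS p (bas Ke1) E2))) C)
     (cj p (sadd (mS p (bas Ke2) E1) (mS p (bas Ke1) E2)) (sinv p (sadd (mS p (bas Ke2) E1) (mS p (bas Ke1) E2))) D)"
        by (rule conj_case[OF g refl refl]) (use a0 b1 E2c in simp_all)
      then show ?thesis by (rule norm01)
    qed
  next
    case a1: False
    then have a1: "E1 Ke1 = 1" using i1 by simp
    show ?thesis
    proof (cases "E1 Ke2 = 0")
      case b0: True
      have "good p q (bas Ke1) (bas Ke2) (cj p (sadd (mS p (bas Ke1) E1) (mS p (bas Ke2) E2)) (sinv p (sadd (mS p (bas Ke1) E1) (mS p (bas Ke2) E2))) A)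
     (cj p (sadd (mS p (bas Ke1) E1) (mS p (bas Ke2) E2)) (sinv p (sadd (mS p (bas Ke1) E1) (mS p (bas Ke2) E2))) B)
     (cj p (sadd (mS p (bas Ke1) E1) (mS p (bas Ke2) E2)) (sinv p (sadd (mS p (bas Ke1) E1) (mS p (bas Ke2) E2))) C)
     (cj p (sadd (mS p (bas Ke1) E1) (mS p (bas Ke2) E2)) (sinv p (sadd (mS p (bas Ke1) E1) (mS p (bas Ke2) E2))) D)"
        by (rule conj_case[OF g refl refl]) (use a1 b0 E2c in simp_all)
      then show ?thesis by (rule norm10)
    next
      case b1: False
      then have b1: "E1 Ke2 = 1" using i2 by simp
      have "mS p (mS p E2 E2) E2 = szero" by (rule nil3) (use a1 b1 E2c in simp_all)
      then have E2z: "E2 = szero" using G(3) by simp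
      then have E1o: "E1 = sone" using G(1) by simp
      have "B = szero" using G(7) E2z by simp
      moreover have "C = szero" using G(8) E2z by simp
      moreover have "D = szero" using G(9) E2z by simp
      ultimately have False
        using comm_contra[OF g, of A] E2z E1o by auto
      then show ?thesis ..
    qed
  qed
qed

lemma basis_closed: "valid_path v as \<Longrightarrow> basis_path v as \<in> kq_carrier"
proof -
  assume va: "valid_path v as"
  have "{p. (basis_path v as :: path \<Rightarrow> 'a) p \<noteq> 0} \<subseteq> {(v, as)}" by (auto simp: basis_path_def)
  then have "finite {p. (basis_path v as :: path \<Rightarrow> 'a) p \<noteq> 0}" by (rule finite_subset) simp
  then show ?thesis using va by (auto simp: kq_carrier_def basis_path_def)
qed

lemma subsc_closed:
  assumes x: "x \<in> kq_carrier" and y: "y \<in> kq_carrier"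
  shows "(\<lambda>p. x p - c * y p) \<in> kq_carrier"
proof -
  have "{p. x p - c * y p \<noteq> 0} \<subseteq> {p. x p \<noteq> 0} \<union> {p. y p \<noteq> 0}" by auto
  then have "finite {p. x p - c * y p \<noteq> 0}"
    using x y by (auto simp: kq_carrier_def intro: finite_subset)
  moreover have "valid_path v as" if "x (v, as) - c * y (v, as) \<noteq> 0" for v as
  proof (cases "x (v, as) = 0")
    case True then have "y (v, as) \<noteq> 0" using that by auto
    then show ?thesis using y by (auto simp: kq_carrier_def)
  next
    case False then show ?thesis using x by (auto simp: kq_carrier_def)
  qed
  ultimately show ?thesis by (auto simp: kq_carrier_def)
qed

lemma sub_closed:
  assumes x: "x \<in> kq_carrier" and y: "y \<in> kq_carrier"
  shows "(\<lambda>p. x p - y p) \<in> kq_carrier"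
  using subsc_closed[OF x y, of 1] by simp

lemma gens_closed:
  "{ (\<lambda>p. basis_path V1 [Aa, Bb] p - basis_path V1 [Bb, Cc] p),
     (\<lambda>p. basis_path V2 [Cc, Dd] p - q * basis_path V2 [Dd, Aa] p) } \<subseteq> carrier (path_alg :: (path \<Rightarrow> 'a::field) ring)"
  by (auto simp: path_alg_def intro!: sub_closed subsc_closed basis_closed)

lemma ideal_rel: "ideal (rel_ideal q) (path_alg :: (path \<Rightarrow> 'a::field) ring)"
  unfolding rel_ideal_def by (rule ring.genideal_ideal[OF ring_path_alg gens_closed])

definition rho :: "'a::field \<Rightarrow> (path \<Rightarrow> 'a) \<Rightarrow> sb \<Rightarrow> 'a" where
  "rho p x = (\<lambda>i. case i of Ke1 \<Rightarrow> x (V1, []) | Ke2 \<Rightarrow> x (V2, []) | Ka \<Rightarrow> x (V1, [Aa])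
     | Kb \<Rightarrow> x (V1, [Bb]) | Kc \<Rightarrow> x (V2, [Cc]) | Kd \<Rightarrow> x (V2, [Dd])
     | Kf \<Rightarrow> x (V1, [Aa, Bb]) + x (V1, [Bb, Cc]) | Kg \<Rightarrow> x (V2, [Dd, Aa]) + p * x (V2, [Cc, Dd]))"

lemma rho_apply[simp]:
  "rho p x Ke1 = x (V1, [])" "rho p x Ke2 = x (V2, [])" "rho p x Ka = x (V1, [Aa])"
  "rho p x Kb = x (V1, [Bb])" "rho p x Kc = x (V2, [Cc])" "rho p x Kd = x (V2, [Dd])"
  "rho p x Kf = x (V1, [Aa, Bb]) + x (V1, [Bb, Cc])" "rho p x Kg = x (V2, [Dd, Aa]) + p * x (V2, [Cc, Dd])"
  by (simp_all add: rho_def)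

lemma pmul_0: "pmul x y (v, []) = x (v, []) * y (v, [])"
  by (simp add: pmul_def)
lemma pmul_1: "pmul x y (v, [a]) = x (v, []) * y (v, [a]) + x (v, [a]) * y (tgt a, [])"
  by (simp add: pmul_def atLeast0AtMost atMost_Suc)
lemma pmul_2: "pmul x y (v, [a, b]) = x (v, []) * y (v, [a, b]) + x (v, [a]) * y (tgt a, [b]) + x (v, [a, b]) * y (tgt b, [])"
  by (simp add: pmul_def atLeast0AtMost atMost_Suc numeral_2_eq_2 algebra_simps)

lemma rho_mul: "rho p (pmul x y) = mS p (rho p x) (rho p y)"
  by (simp add: sb_eq pmul_0 pmul_1 pmul_2 algebra_simps)

lemma rho_add: "rho p (\<lambda>\<pi>. x \<pi> + y \<pi>) = sadd (rho p x) (rho p y)"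
  by (simp add: sb_eq algebra_simps)

lemma rho_pone: "rho p pone = sone"
  by (simp add: sb_eq pone_def)

lemma rho_scal: "rho p (scal c pone) = ssc c sone"
  by (simp add: sb_eq pone_def scal_def)

lemma rho_zero: "rho p (\<lambda>_. 0) = szero"
  by (simp add: sb_eq)

lemma rho_gens:
  "rho p (\<lambda>\<pi>. basis_path V1 [Aa, Bb] \<pi> - basis_path V1 [Bb, Cc] \<pi>) = szero"
  "rho p (\<lambda>\<pi>. basis_path V2 [Cc, Dd] \<pi> - p * basis_path V2 [Dd, Aa] \<pi>) = szero"
  by (simp_all add: sb_eq basis_path_def)

definition lift :: "(sb \<Rightarrow> 'a::field) \<Rightarrow> path \<Rightarrow> 'a" where
  "lift s = (\<lambda>\<pi>. if \<pi> = (V1, []) then s Ke1 else if \<pi> = (V2, []) then s Ke2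
     else if \<pi> = (V1, [Aa]) then s Ka else if \<pi> = (V1, [Bb]) then s Kb
     else if \<pi> = (V2, [Cc]) then s Kc else if \<pi> = (V2, [Dd]) then s Kd
     else if \<pi> = (V1, [Aa, Bb]) then s Kf else if \<pi> = (V2, [Dd, Aa]) then s Kg else 0)"

lemma lift_closed: "lift s \<in> kq_carrier"
proof -
  have "{\<pi>. lift s \<pi> \<noteq> 0} \<subseteq> {(V1, []), (V2, []), (V1, [Aa]), (V1, [Bb]), (V2, [Cc]), (V2, [Dd]), (V1, [Aa, Bb]), (V2, [Dd, Aa])}"
    by (auto simp: lift_def split: if_splits)
  then have "finite {\<pi>. lift s \<pi> \<noteq> 0}" by (rule finite_subset) simp
  moreover have "valid_path v as" if "lift s (v, as) \<noteq> 0" for v as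
    using that by (auto simp: lift_def split: if_splits)
  ultimately show ?thesis by (auto simp: kq_carrier_def)
qed

lemma rho_lift: "rho p (lift s) = s"
  by (simp add: sb_eq lift_def)

lemma K_ideal: "ideal {x \<in> kq_carrier. rho p x = szero} (path_alg :: (path \<Rightarrow> 'a::field) ring)"
proof -
  interpret R: ring "path_alg :: (path \<Rightarrow> 'a::field) ring" by (rule ring_path_alg)
  let ?K = "{x \<in> kq_carrier. rho p x = szero}"
  have addK: "x \<oplus>\<^bsub>path_alg\<^esub> y \<in> ?K" if "x \<in> ?K" "y \<in> ?K" for x y
    using that by (simp add: path_alg_def add_closed rho_add)
  show ?thesis
  proof (rule idealI[OF ring_path_alg])
    show "subgroup ?K (add_monoid (path_alg :: (path \<Rightarrow> 'a::field) ring))"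
    proof (rule subgroup.intro)
      show "?K \<subseteq> carrier (add_monoid path_alg)" by (auto simp: path_alg_def)
      show "x \<otimes>\<^bsub>add_monoid path_alg\<^esub> y \<in> ?K" if "x \<in> ?K" "y \<in> ?K" for x y
        using addK[OF that] by simp
      show "\<one>\<^bsub>add_monoid path_alg\<^esub> \<in> ?K" by (simp add: path_alg_def zero_closed rho_zero)
      show "inv\<^bsub>add_monoid path_alg\<^esub> x \<in> ?K" if xK: "x \<in> ?K" for x
      proof -
        have xc: "x \<in> carrier path_alg" using xK by (simp add: path_alg_def)
        have ic: "\<ominus>\<^bsub>path_alg\<^esub> x \<in> carrier path_alg" using xc by simp
        have "x \<oplus>\<^bsub>path_alg\<^esub> (\<ominus>\<^bsub>path_alg\<^esub> x) = \<zero>\<^bsub>path_alg\<^esub>" by (rule R.r_neg[OF xc])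
        then have "rho p (\<lambda>\<pi>. x \<pi> + (\<ominus>\<^bsub>path_alg\<^esub> x) \<pi>) = rho p (\<lambda>_. 0)"
          by (simp add: path_alg_def)
        then have "sadd (rho p x) (rho p (\<ominus>\<^bsub>path_alg\<^esub> x)) = szero"
          by (simp add: rho_add rho_zero)
        then have "rho p (\<ominus>\<^bsub>path_alg\<^esub> x) = szero" using xK by simp
        then show ?thesis using ic by (simp add: path_alg_def a_inv_def)
      qed
    qed
  next
    fix a x assume a: "a \<in> ?K" and x: "x \<in> carrier (path_alg :: (path \<Rightarrow> 'a::field) ring)"
    show "x \<otimes>\<^bsub>path_alg\<^esub> a \<in> ?K" "a \<otimes>\<^bsub>path_alg\<^esub> x \<in> ?K"
      using a x by (simp_all add: path_alg_def pmul_closed rho_mul)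
  qed
qed

lemma rel_in_K: "x \<in> rel_ideal p \<Longrightarrow> rho p x = szero"
proof -
  assume x: "x \<in> rel_ideal p"
  have "rel_ideal p \<subseteq> {x \<in> kq_carrier. rho p x = szero}"
    unfolding rel_ideal_def
    by (rule ring.genideal_minimal[OF ring_path_alg K_ideal])
       (use gens_closed[of p] in \<open>auto simp: path_alg_def rho_gens\<close>)
  then show ?thesis using x by auto
qed

lemma basis_mul:
  "pmul (basis_path v xs) (basis_path w ys) =
   (if w = end_vert v xs then basis_path v (xs @ ys) else (\<lambda>_. 0 :: 'a::field))"
proof (rule ext, clarify)
  fix u and cs :: "arr list"
  let ?g = "if u = v \<and> cs = xs @ ys \<and> w = end_vert v xs then (1::'a) else 0"
  have t: "(basis_path v xs (u, take i cs) :: 'a) * basis_path w ys (end_vert u (take i cs), drop i cs)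
      = (if i = length xs then ?g else 0)" if i: "i \<in> {0..length cs}" for i
  proof (cases "u = v \<and> take i cs = xs \<and> end_vert u (take i cs) = w \<and> drop i cs = ys")
    case True
    then have "cs = xs @ ys" by (metis append_take_drop_id)
    moreover have "i = length xs" using True i by auto
    ultimately show ?thesis using True by (auto simp: basis_path_def)
  next
    case False
    have lhs: "(basis_path v xs (u, take i cs) :: 'a) * basis_path w ys (end_vert u (take i cs), drop i cs) = 0"
      using False unfolding basis_path_def by auto
    have "\<not> (i = length xs \<and> u = v \<and> cs = xs @ ys \<and> w = end_vert v xs)"
    proof
      assume H: "i = length xs \<and> u = v \<and> cs = xs @ ys \<and> w = end_vert v xs"
      then have "take i cs = xs" "drop i cs = ys" by auto
      then show False using False H by auto
    qed
    then have "(if i = length xs then ?g else 0) = 0" by auto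
    then show ?thesis using lhs by simp
  qed
  have "pmul (basis_path v xs) (basis_path w ys) (u, cs) = (\<Sum>i\<in>{0..length cs}. (basis_path v xs (u, take i cs) :: 'a) * basis_path w ys (end_vert u (take i cs), drop i cs))"
    by (simp add: pmul_def)
  also have "\<dots> = (\<Sum>i\<in>{0..length cs}. if i = length xs then ?g else 0)"
    by (rule sum.cong[OF refl]) (rule t)
  also have "\<dots> = ?g" by (auto simp: sum.delta)
  also have "\<dots> = (if w = end_vert v xs then basis_path v (xs @ ys) else (\<lambda>_. 0 :: 'a)) (u, cs)"
    by (auto simp: basis_path_def)
  finally show "pmul (basis_path v xs) (basis_path w ys) (u, cs) =
     (if w = end_vert v xs then basis_path v (xs @ ys) else (\<lambda>_. 0 :: 'a)) (u, cs)" .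
qed

lemma scal_pmul: "pmul (scal c x) y = scal c (pmul x (y :: path \<Rightarrow> 'a::field))"
  by (rule ext, clarify) (simp add: pmul_def scal_def sum_distrib_left mult.assoc)

lemma scal_pone_mul: "pmul (scal c pone) y = scal c (y :: path \<Rightarrow> 'a::field)"
  by (simp add: scal_pmul pone_mul)

lemma scal_pone_closed: "scal c pone \<in> (kq_carrier :: (path \<Rightarrow> 'a::field) set)"
proof -
  have "{p. (scal c pone :: path \<Rightarrow> 'a) p \<noteq> 0} \<subseteq> {p. (pone :: path \<Rightarrow> 'a) p \<noteq> 0}"
    by (auto simp: scal_def)
  then show ?thesis using pone_closed[where 'a='a]
    by (auto simp: kq_carrier_def scal_def intro: finite_subset)
qed

lemma scal_closed: "y \<in> kq_carrier \<Longrightarrow> scal c y \<in> (kq_carrier :: (path \<Rightarrow> 'a::field) set)"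
  using pmul_closed[OF scal_pone_closed] by (simp add: scal_pone_mul)

lemma gen_path:
  fixes \<psi> :: "(path \<Rightarrow> 'a::field) \<Rightarrow> 'b"
  assumes hadd: "\<And>x y. x \<in> kq_carrier \<Longrightarrow> y \<in> kq_carrier \<Longrightarrow> \<psi> (\<lambda>\<pi>. x \<pi> + y \<pi>) = P (\<psi> x) (\<psi> y)"
    and hmul: "\<And>x y. x \<in> kq_carrier \<Longrightarrow> y \<in> kq_carrier \<Longrightarrow> \<psi> (pmul x y) = M (\<psi> x) (\<psi> y)"
    and Tadd: "\<And>a b. a \<in> T \<Longrightarrow> b \<in> T \<Longrightarrow> P a b \<in> T"
    and Tmul: "\<And>a b. a \<in> T \<Longrightarrow> b \<in> T \<Longrightarrow> M a b \<in> T"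
    and Tsc: "\<And>c. \<psi> (scal c pone) \<in> T"
    and T1: "\<psi> (basis_path V1 []) \<in> T" and T2: "\<psi> (basis_path V2 []) \<in> T"
    and Ta: "\<psi> (basis_path V1 [Aa]) \<in> T" and Tb: "\<psi> (basis_path V1 [Bb]) \<in> T"
    and Tc: "\<psi> (basis_path V2 [Cc]) \<in> T" and Td: "\<psi> (basis_path V2 [Dd]) \<in> T"
    and x: "x \<in> kq_carrier"
  shows "\<psi> x \<in> T"
proof -
  have B: "\<psi> (basis_path v as) \<in> T" if "valid_path v as" for v as
    using that
  proof (induction as arbitrary: v)
    case Nil then show ?case using T1 T2 by (cases v) auto
  next
    case (Cons a as)
    then have sa: "src a = v" and va: "valid_path (tgt a) as" by auto
    have eq: "basis_path v (a # as) = pmul (basis_path v [a]) (basis_path (tgt a) as)"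
      by (simp add: basis_mul)
    have c1: "basis_path v [a] \<in> kq_carrier" using sa by (intro basis_closed) simp
    have c2: "basis_path (tgt a) as \<in> kq_carrier" using va by (rule basis_closed)
    have "\<psi> (basis_path v [a]) \<in> T" using sa Ta Tb Tc Td by (cases a) auto
    then show ?case unfolding eq hmul[OF c1 c2] using Cons.IH[OF va] by (rule Tmul)
  qed
  let ?r = "\<lambda>F. (\<lambda>\<pi>. if \<pi> \<in> F then x \<pi> else 0)"
  have R: "?r F \<in> kq_carrier \<and> \<psi> (?r F) \<in> T" if "finite F" for F
    using that
  proof (induction F rule: finite_induct)
    case empty
    have "?r {} = scal 0 pone" by (simp add: scal_def)
    then show ?case using Tsc[of 0] scal_pone_closed[of 0] by simp
  next
    case (insert \<pi> F)
    show ?case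
    proof (cases "x \<pi> = 0")
      case True
      then have "?r (insert \<pi> F) = ?r F" by auto
      then show ?thesis using insert.IH by simp
    next
      case False
      obtain v as where pi: "\<pi> = (v, as)" by (cases \<pi>)
      then have va: "valid_path v as" using x False by (auto simp: kq_carrier_def)
      have bc: "basis_path v as \<in> kq_carrier" by (rule basis_closed[OF va])
      have sc: "scal (x \<pi>) (basis_path v as) \<in> kq_carrier" by (rule scal_closed[OF bc])
      have eq: "?r (insert \<pi> F) = (\<lambda>\<sigma>. ?r F \<sigma> + scal (x \<pi>) (basis_path v as) \<sigma>)"
        using insert.hyps(2) by (auto simp: scal_def basis_path_def pi)
      have "\<psi> (scal (x \<pi>) (basis_path v as)) = M (\<psi> (scal (x \<pi>) pone)) (\<psi> (basis_path v as))"
        using hmul[OF scal_pone_closed bc] by (simp add: scal_pone_mul)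
      then have "\<psi> (scal (x \<pi>) (basis_path v as)) \<in> T" using Tmul[OF Tsc B[OF va]] by simp
      then have "\<psi> (?r (insert \<pi> F)) \<in> T"
        unfolding eq hadd[OF insert.IH[THEN conjunct1] sc] using insert.IH by (intro Tadd) auto
      moreover have "?r (insert \<pi> F) \<in> kq_carrier"
        unfolding eq using insert.IH sc by (intro add_closed) auto
      ultimately show ?thesis by simp
    qed
  qed
  have fin: "finite {\<pi>. x \<pi> \<noteq> 0}" using x by (simp add: kq_carrier_def)
  have "?r {\<pi>. x \<pi> \<noteq> 0} = x" by auto
  then show ?thesis using R[OF fin] by simp
qed

definition rb :: "'a::field \<Rightarrow> (path \<Rightarrow> 'a) set \<Rightarrow> sb \<Rightarrow> 'a" where
  "rb p X = rho p (SOME y. y \<in> X)"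

lemma gens_in_ideal:
  "(\<lambda>\<pi>. basis_path V1 [Aa, Bb] \<pi> - basis_path V1 [Bb, Cc] \<pi>) \<in> rel_ideal q"
  "(\<lambda>\<pi>. basis_path V2 [Cc, Dd] \<pi> - q * basis_path V2 [Dd, Aa] \<pi>) \<in> rel_ideal (q::'a::field)"
  using ring.genideal_self[OF ring_path_alg gens_closed[of q]] unfolding rel_ideal_def by auto

lemma rb_coset:
  assumes y: "y \<in> carrier (path_alg :: (path \<Rightarrow> 'a::field) ring)"
  shows "rb p (rel_ideal p +>\<^bsub>path_alg\<^esub> y) = rho p y"
proof -
  interpret Ip: ideal "rel_ideal p" "path_alg :: (path \<Rightarrow> 'a) ring" by (rule ideal_rel)
  have mem: "y \<in> rel_ideal p +>\<^bsub>path_alg\<^esub> y" by (rule Ip.a_rcos_self[OF y])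
  have "rho p z = rho p y" if z: "z \<in> rel_ideal p +>\<^bsub>path_alg\<^esub> y" for z
  proof -
    from z obtain i where i: "i \<in> rel_ideal p" and zi: "z = i \<oplus>\<^bsub>path_alg\<^esub> y"
      unfolding a_r_coset_def' by auto
    have "z = (\<lambda>\<pi>. i \<pi> + y \<pi>)" using zi by (simp add: path_alg_def)
    then show ?thesis using rel_in_K[OF i] by (simp add: rho_add)
  qed
  moreover have "(SOME z. z \<in> rel_ideal p +>\<^bsub>path_alg\<^esub> y) \<in> rel_ideal p +>\<^bsub>path_alg\<^esub> y"
    using someI[of "\<lambda>z. z \<in> rel_ideal p +>\<^bsub>path_alg\<^esub> y" y] mem by blast
  ultimately show ?thesis unfolding rb_def by blast
qed

lemma rb_ideal: "rb p (rel_ideal p) = (szero :: sb \<Rightarrow> 'a::field)"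
proof -
  have "(SOME z. z \<in> rel_ideal p) \<in> rel_ideal (p::'a)"
    using gens_in_ideal(1)[of p] someI[of "\<lambda>z. z \<in> rel_ideal p"] by blast
  then show ?thesis unfolding rb_def by (rule rel_in_K)
qed

lemma pone_split: "pone = (\<lambda>\<pi>. basis_path V1 [] \<pi> + basis_path V2 [] \<pi>)"
proof (rule ext, clarify)
  fix v and cs :: "arr list"
  show "pone (v, cs) = (basis_path V1 [] (v, cs) + basis_path V2 [] (v, cs) :: 'a)"
    by (cases v) (auto simp: pone_def basis_path_def)
qed

theorem corollary2p11:
  fixes p q :: "'a::field_char_0"
  assumes "alg_closed_field TYPE('a)"
    and "p \<noteq> 0" and "q \<noteq> 0"
    and "kalg_iso q p"
  shows "p = q"
proof -
  obtain h where hiso: "h \<in> ring_iso (B_alg q) (B_alg p)"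
    and hc: "\<And>c. h (rel_ideal q +>\<^bsub>path_alg\<^esub> scal c pone) = rel_ideal p +>\<^bsub>path_alg\<^esub> scal c pone"
    using assms(4) unfolding kalg_iso_def by blast
  have hhom: "h \<in> ring_hom (B_alg q) (B_alg p)" and hbij: "bij_betw h (carrier (B_alg q)) (carrier (B_alg p))"
    using hiso by (auto simp: ring_iso_def)
  interpret Iq: ideal "rel_ideal q" "path_alg :: (path \<Rightarrow> 'a) ring" by (rule ideal_rel)
  interpret Ip: ideal "rel_ideal p" "path_alg :: (path \<Rightarrow> 'a) ring" by (rule ideal_rel)
  let ?C = "carrier (path_alg :: (path \<Rightarrow> 'a) ring)"
  let ?Rq = "\<lambda>x. rel_ideal q +>\<^bsub>path_alg\<^esub> x"
  let ?Rp = "\<lambda>x. rel_ideal p +>\<^bsub>path_alg\<^esub> x"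
  have Cq: "carrier (B_alg q) = a_rcosets\<^bsub>path_alg\<^esub> (rel_ideal q)"
    and Cp: "carrier (B_alg p) = a_rcosets\<^bsub>path_alg\<^esub> (rel_ideal p)"
    by (simp_all add: B_alg_def FactRing_def)
  have Rq_in: "?Rq x \<in> carrier (B_alg q)" if "x \<in> ?C" for x
    unfolding Cq by (rule Iq.a_rcosetsI[OF Iq.a_subset that])
  have Rp_in: "?Rp x \<in> carrier (B_alg p)" if "x \<in> ?C" for x
    unfolding Cp by (rule Iq.a_rcosetsI[OF Ip.a_subset that])
  have Rp_ex: "\<exists>y \<in> ?C. X = ?Rp y" if "X \<in> carrier (B_alg p)" for X
    using that unfolding Cp A_RCOSETS_def' by auto
  have Rq_ex: "\<exists>y \<in> ?C. X = ?Rq y" if "X \<in> carrier (B_alg q)" for X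
    using that unfolding Cq A_RCOSETS_def' by auto
  have mulq: "?Rq x \<otimes>\<^bsub>B_alg q\<^esub> ?Rq y = ?Rq (pmul x y)" if "x \<in> ?C" "y \<in> ?C" for x y
    using Iq.rcoset_mult_add[OF that] by (simp add: B_alg_def FactRing_def path_alg_def)
  have mulp: "?Rp x \<otimes>\<^bsub>B_alg p\<^esub> ?Rp y = ?Rp (pmul x y)" if "x \<in> ?C" "y \<in> ?C" for x y
    using Ip.rcoset_mult_add[OF that] by (simp add: B_alg_def FactRing_def path_alg_def)
  have addq: "?Rq x \<oplus>\<^bsub>B_alg q\<^esub> ?Rq y = ?Rq (\<lambda>\<pi>. x \<pi> + y \<pi>)" if "x \<in> ?C" "y \<in> ?C" for x y
    using Iq.a_rcos_sum[OF that] by (simp add: B_alg_def FactRing_def path_alg_def)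
  have addp: "?Rp x \<oplus>\<^bsub>B_alg p\<^esub> ?Rp y = ?Rp (\<lambda>\<pi>. x \<pi> + y \<pi>)" if "x \<in> ?C" "y \<in> ?C" for x y
    using Ip.a_rcos_sum[OF that] by (simp add: B_alg_def FactRing_def path_alg_def)
  have hzero: "h (rel_ideal q) = rel_ideal p"
  proof -
    have "h \<zero>\<^bsub>B_alg q\<^esub> = \<zero>\<^bsub>B_alg p\<^esub>"
      by (rule ring_hom_zero[OF hhom]) (simp_all add: B_alg_def Iq.quotient_is_ring Ip.quotient_is_ring)
    then show ?thesis by (simp add: B_alg_def FactRing_def)
  qed
  define psi where "psi x = rb p (h (?Rq x))" for x
  have hR: "\<exists>y \<in> ?C. h (?Rq x) = ?Rp y" if "x \<in> ?C" for x
    using Rp_ex[OF ring_hom_closed[OF hhom Rq_in[OF that]]] .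
  have psi_mul: "psi (pmul x y) = mS p (psi x) (psi y)" if x: "x \<in> ?C" and y: "y \<in> ?C" for x y
  proof -
    obtain x' where x': "x' \<in> ?C" "h (?Rq x) = ?Rp x'" using hR[OF x] by blast
    obtain y' where y': "y' \<in> ?C" "h (?Rq y) = ?Rp y'" using hR[OF y] by blast
    have "h (?Rq (pmul x y)) = h (?Rq x \<otimes>\<^bsub>B_alg q\<^esub> ?Rq y)" by (simp add: mulq[OF x y])
    also have "\<dots> = h (?Rq x) \<otimes>\<^bsub>B_alg p\<^esub> h (?Rq y)"
      by (rule ring_hom_mult[OF hhom Rq_in[OF x] Rq_in[OF y]])
    also have "\<dots> = ?Rp (pmul x' y')" using x' y' mulp by simp
    finally have hx: "h (?Rq (pmul x y)) = ?Rp (pmul x' y')" .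
    have pc: "pmul x' y' \<in> ?C" using x' y' pmul_closed by (simp add: path_alg_def)
    have "psi (pmul x y) = rho p (pmul x' y')"
      unfolding psi_def hx by (rule rb_coset[OF pc])
    also have "\<dots> = mS p (psi x) (psi y)"
      unfolding psi_def x'(2) y'(2) rb_coset[OF x'(1)] rb_coset[OF y'(1)] by (rule rho_mul)
    finally show ?thesis .
  qed
  have psi_add: "psi (\<lambda>\<pi>. x \<pi> + y \<pi>) = sadd (psi x) (psi y)" if x: "x \<in> ?C" and y: "y \<in> ?C" for x y
  proof -
    obtain x' where x': "x' \<in> ?C" "h (?Rq x) = ?Rp x'" using hR[OF x] by blast
    obtain y' where y': "y' \<in> ?C" "h (?Rq y) = ?Rp y'" using hR[OF y] by blast
    have "h (?Rq (\<lambda>\<pi>. x \<pi> + y \<pi>)) = h (?Rq x \<oplus>\<^bsub>B_alg q\<^esub> ?Rq y)" by (simp add: addq[OF x y])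
    also have "\<dots> = h (?Rq x) \<oplus>\<^bsub>B_alg p\<^esub> h (?Rq y)"
      by (rule ring_hom_add[OF hhom Rq_in[OF x] Rq_in[OF y]])
    also have "\<dots> = ?Rp (\<lambda>\<pi>. x' \<pi> + y' \<pi>)" using x' y' addp by simp
    finally have hx: "h (?Rq (\<lambda>\<pi>. x \<pi> + y \<pi>)) = ?Rp (\<lambda>\<pi>. x' \<pi> + y' \<pi>)" .
    have pc: "(\<lambda>\<pi>. x' \<pi> + y' \<pi>) \<in> ?C" using x' y' add_closed by (simp add: path_alg_def)
    have "psi (\<lambda>\<pi>. x \<pi> + y \<pi>) = rho p (\<lambda>\<pi>. x' \<pi> + y' \<pi>)"
      unfolding psi_def hx by (rule rb_coset[OF pc])
    also have "\<dots> = sadd (psi x) (psi y)"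
      unfolding psi_def x'(2) y'(2) rb_coset[OF x'(1)] rb_coset[OF y'(1)] by (rule rho_add)
    finally show ?thesis .
  qed
  have psi_sc: "psi (scal c pone) = ssc c sone" for c
  proof -
    have sc: "scal c pone \<in> ?C" by (simp add: path_alg_def scal_pone_closed)
    show ?thesis unfolding psi_def hc rb_coset[OF sc] by (rule rho_scal)
  qed
  have psi_I: "psi g = szero" if "g \<in> rel_ideal q" for g
    unfolding psi_def using that by (simp add: Iq.a_rcos_const hzero rb_ideal)
  have psi_surj: "\<exists>x \<in> ?C. psi x = s" for s
  proof -
    have lc: "lift s \<in> ?C" using lift_closed by (simp add: path_alg_def)
    obtain X where X: "X \<in> carrier (B_alg q)" "h X = ?Rp (lift s)"
      using hbij Rp_in[OF lc] unfolding bij_betw_def by (metis imageE)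
    obtain x where x: "x \<in> ?C" "X = ?Rq x" using Rq_ex[OF X(1)] by blast
    have "psi x = s" unfolding psi_def using X x lc by (simp add: rb_coset rho_lift)
    then show ?thesis using x by blast
  qed
  have psi_scal: "psi (scal c y) = ssc c (psi y)" if y: "y \<in> ?C" for c y
  proof -
    have sc: "scal c pone \<in> ?C" by (simp add: path_alg_def scal_pone_closed)
    show ?thesis using psi_mul[OF sc y] by (simp add: scal_pone_mul psi_sc ssc_one_l)
  qed
  let ?b = "\<lambda>v as. basis_path v as :: path \<Rightarrow> 'a"
  have bc: "?b v as \<in> ?C" if "valid_path v as" for v as
    using basis_closed[OF that] by (simp add: path_alg_def)
  define E1 where "E1 = psi (?b V1 [])"
  define E2 where "E2 = psi (?b V2 [])"
  define A where "A = psi (?b V1 [Aa])"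
  define B where "B = psi (?b V1 [Bb])"
  define C where "C = psi (?b V2 [Cc])"
  define D where "D = psi (?b V2 [Dd])"
  have c1: "?b V1 [] \<in> ?C" "?b V2 [] \<in> ?C" "?b V1 [Aa] \<in> ?C" "?b V1 [Bb] \<in> ?C" "?b V2 [Cc] \<in> ?C"
    "?b V2 [Dd] \<in> ?C" "?b V1 [Aa, Bb] \<in> ?C" "?b V1 [Bb, Cc] \<in> ?C" "?b V2 [Cc, Dd] \<in> ?C"
    "?b V2 [Dd, Aa] \<in> ?C"
    by (simp_all add: bc)
  have pm: "psi (pmul (?b v xs) (?b w ys)) = mS p (psi (?b v xs)) (psi (?b w ys))"
    if "?b v xs \<in> ?C" "?b w ys \<in> ?C" for v xs w ys
    using psi_mul[OF that] .
  have z0: "psi (\<lambda>_. 0) = szero"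
  proof -
    have "(\<lambda>_. 0 :: 'a) = scal 0 pone" by (simp add: scal_def)
    then show ?thesis using psi_sc[of 0] by (simp add: sb_eq)
  qed
  have g1: "sadd E1 E2 = sone"
  proof -
    have "psi pone = sone" using psi_sc[of 1] by (simp add: scal_def sb_eq)
    then show ?thesis using psi_add[OF c1(1) c1(2)] unfolding E1_def E2_def pone_split[symmetric] by simp
  qed
  have g2: "mS p E1 E1 = E1" "mS p E2 E2 = E2" "mS p E1 E2 = szero" "mS p E2 E1 = szero"
    unfolding E1_def E2_def using pm[OF c1(1) c1(1)] pm[OF c1(2) c1(2)] pm[OF c1(1) c1(2)] pm[OF c1(2) c1(1)]
    by (simp_all add: basis_mul z0)
  have g3: "mS p (mS p E1 A) E1 = A" "mS p (mS p E1 B) E2 = B" "mS p (mS p E2 C) E2 = C" "mS p (mS p E2 D) E1 = D"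
    unfolding E1_def E2_def A_def B_def C_def D_def
    using pm[OF c1(1) c1(3)] pm[OF c1(3) c1(1)] pm[OF c1(1) c1(4)] pm[OF c1(4) c1(2)]
      pm[OF c1(2) c1(5)] pm[OF c1(5) c1(2)] pm[OF c1(2) c1(6)] pm[OF c1(6) c1(1)]
    by (simp_all add: basis_mul)
  have ab: "mS p A B = psi (?b V1 [Aa, Bb])" "mS p B C = psi (?b V1 [Bb, Cc])"
    "mS p C D = psi (?b V2 [Cc, Dd])" "mS p D A = psi (?b V2 [Dd, Aa])"
    unfolding A_def B_def C_def D_def
    using pm[OF c1(3) c1(4)] pm[OF c1(4) c1(5)] pm[OF c1(5) c1(6)] pm[OF c1(6) c1(3)]
    by (simp_all add: basis_mul)
  let ?g1 = "\<lambda>\<pi>. ?b V1 [Aa, Bb] \<pi> - ?b V1 [Bb, Cc] \<pi>"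
  let ?g2 = "\<lambda>\<pi>. ?b V2 [Cc, Dd] \<pi> - q * ?b V2 [Dd, Aa] \<pi>"
  have g1c: "?g1 \<in> ?C" "?g2 \<in> ?C" using gens_closed[of q] by auto
  have r1: "mS p A B = mS p B C"
  proof -
    have "?b V1 [Aa, Bb] = (\<lambda>\<pi>. ?g1 \<pi> + ?b V1 [Bb, Cc] \<pi>)" by simp
    then have "psi (?b V1 [Aa, Bb]) = sadd (psi ?g1) (psi (?b V1 [Bb, Cc]))"
      using psi_add[OF g1c(1) c1(8)] by simp
    then show ?thesis using psi_I[OF gens_in_ideal(1)] ab by simp
  qed
  have r2: "mS p C D = ssc q (mS p D A)"
  proof -
    have e: "?b V2 [Cc, Dd] = (\<lambda>\<pi>. ?g2 \<pi> + scal q (?b V2 [Dd, Aa]) \<pi>)" by (simp add: scal_def)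
    have sq: "scal q (?b V2 [Dd, Aa]) \<in> ?C" using scal_closed c1(10) by (simp add: path_alg_def)
    have "psi (?b V2 [Cc, Dd]) = psi (\<lambda>\<pi>. ?g2 \<pi> + scal q (?b V2 [Dd, Aa]) \<pi>)"
      using e by (rule arg_cong)
    also have "\<dots> = sadd (psi ?g2) (psi (scal q (?b V2 [Dd, Aa])))"
      by (rule psi_add[OF g1c(2) sq])
    finally have "psi (?b V2 [Cc, Dd]) = sadd (psi ?g2) (psi (scal q (?b V2 [Dd, Aa])))" .
    then show ?thesis using psi_I[OF gens_in_ideal(2)] ab psi_scal[OF c1(10)] by simp
  qed
  have gen: "\<forall>z. z \<in> T" if T: "subalg p T" "E1 \<in> T" "E2 \<in> T" "A \<in> T" "B \<in> T" "C \<in> T" "D \<in> T" for T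
  proof
    fix z
    obtain x where x: "x \<in> ?C" "psi x = z" using psi_surj by blast
    have "psi x \<in> T"
    proof (rule gen_path[where P = sadd and M = "mS p"])
      show "x \<in> kq_carrier" using x by (simp add: path_alg_def)
      show "psi (\<lambda>\<pi>. x \<pi> + y \<pi>) = sadd (psi x) (psi y)" if "x \<in> kq_carrier" "y \<in> kq_carrier" for x y
        using psi_add that by (simp add: path_alg_def)
      show "psi (pmul x y) = mS p (psi x) (psi y)" if "x \<in> kq_carrier" "y \<in> kq_carrier" for x y
        using psi_mul that by (simp add: path_alg_def)
      show "sadd a b \<in> T" if "a \<in> T" "b \<in> T" for a b using T(1) that by (simp add: subalg_def)
      show "mS p a b \<in> T" if "a \<in> T" "b \<in> T" for a b using T(1) that by (simp add: subalg_def)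
      show "psi (scal c pone) \<in> T" for c using T(1) by (simp add: subalg_def psi_sc)
    qed (use T in \<open>simp_all add: E1_def E2_def A_def B_def C_def D_def\<close>)
    then show "z \<in> T" using x by simp
  qed
  have "good p q E1 E2 A B C D"
    unfolding good_def using g1 g2 g3[symmetric] r1 r2 gen by blast
  then show ?thesis by (rule good_pq)
qed

end
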